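(* Let $L$ be a finite semimodular lattice with exactly two coatoms and $U$ a finite semimodular lattice with exactly two atoms. Then any vertical 2-sum $L +_2 U$ is a semimodular lattice.
   Context: Semimodular means upper semimodular: whenever $s,t \succ s \wedge t$ (covering relations), then $s,t \prec s \vee t$. Let $L' = L \setminus \{\top_L\}$ and $U' = U \setminus \{\bot_U\}$. A vertical 2-sum $L +_2 U$ is the poset obtained from the disjoint union of $L'$ and $U'$ by identifying the two coatoms of $L$ with the two atoms of $U$ via some bijection; $x \le y$ iff $x,y \in L'$ and $x \le_L y$, or $x,y \in U'$ and $x \le_U y$, or $x \in L'$, $y \in U'$ and there is an identified element $c$ with $x \le_L c$ and $c \le_U y$. (This poset is a lattice.) *)

theory Defs
  imports Main
begin

definition covers_on :: "'a set \<Rightarrow> ('a \<Rightarrow> 'a \<Rightarrow> bool) \<Rightarrow> 'a \<Rightarrow> 'a \<Rightarrow> bool" where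
  "covers_on A le x y \<longleftrightarrow> x \<in> A \<and> y \<in> A \<and> le x y \<and> x \<noteq> y \<and>
     \<not> (\<exists>z\<in>A. le x z \<and> le z y \<and> z \<noteq> x \<and> z \<noteq> y)"

definition is_sup_on :: "'a set \<Rightarrow> ('a \<Rightarrow> 'a \<Rightarrow> bool) \<Rightarrow> 'a \<Rightarrow> 'a \<Rightarrow> 'a \<Rightarrow> bool" where
  "is_sup_on A le x y j \<longleftrightarrow> j \<in> A \<and> le x j \<and> le y j \<and>
     (\<forall>z\<in>A. le x z \<and> le y z \<longrightarrow> le j z)"

definition is_inf_on :: "'a set \<Rightarrow> ('a \<Rightarrow> 'a \<Rightarrow> bool) \<Rightarrow> 'a \<Rightarrow> 'a \<Rightarrow> 'a \<Rightarrow> bool" where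
  "is_inf_on A le x y m \<longleftrightarrow> m \<in> A \<and> le m x \<and> le m y \<and>
     (\<forall>z\<in>A. le z x \<and> le z y \<longrightarrow> le z m)"

definition partial_order_on' :: "'a set \<Rightarrow> ('a \<Rightarrow> 'a \<Rightarrow> bool) \<Rightarrow> bool" where
  "partial_order_on' A le \<longleftrightarrow>
     (\<forall>x\<in>A. le x x) \<and>
     (\<forall>x\<in>A. \<forall>y\<in>A. le x y \<and> le y x \<longrightarrow> x = y) \<and>
     (\<forall>x\<in>A. \<forall>y\<in>A. \<forall>z\<in>A. le x y \<and> le y z \<longrightarrow> le x z)"

definition lattice_on :: "'a set \<Rightarrow> ('a \<Rightarrow> 'a \<Rightarrow> bool) \<Rightarrow> bool" where
  "lattice_on A le \<longleftrightarrow> partial_order_on' A le \<and>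
     (\<forall>x\<in>A. \<forall>y\<in>A. (\<exists>j. is_sup_on A le x y j) \<and> (\<exists>m. is_inf_on A le x y m))"

definition semimodular_on :: "'a set \<Rightarrow> ('a \<Rightarrow> 'a \<Rightarrow> bool) \<Rightarrow> bool" where
  "semimodular_on A le \<longleftrightarrow>
     (\<forall>s\<in>A. \<forall>t\<in>A. \<forall>m j. is_inf_on A le s t m \<and> is_sup_on A le s t j \<and>
        covers_on A le m s \<and> covers_on A le m t \<longrightarrow>
        covers_on A le s j \<and> covers_on A le t j)"

definition semimodular :: "('a::lattice) itself \<Rightarrow> bool" where
  "semimodular _ \<longleftrightarrow> semimodular_on (UNIV :: 'a set) (\<le>)"

definition coatoms :: "'a::bounded_lattice set" where
  "coatoms = {c. covers_on UNIV (\<le>) c top}"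

definition atoms :: "'a::bounded_lattice set" where
  "atoms = {a. covers_on UNIV (\<le>) bot a}"

text \<open>Elements of L +_2 U are represented in the sum type: \<open>Inl x\<close> for
  \<open>x \<in> L' = L - {top}\<close> (the coatoms c of L stand for the identified
  elements c = f c), and \<open>Inr u\<close> for \<open>u \<in> U' = U - {bot}\<close> that is not an atom.
  \<open>vs_L\<close>/\<open>vs_U\<close> give the element viewed in L' resp. U' (if it belongs there).\<close>

definition vs2_carrier :: "('a::bounded_lattice \<Rightarrow> 'b::bounded_lattice) \<Rightarrow> ('a + 'b) set" where
  "vs2_carrier f = Inl ` (UNIV - {top}) \<union> Inr ` (UNIV - {bot} - atoms)"

definition vs_L :: "('a::bounded_lattice \<Rightarrow> 'b::bounded_lattice) \<Rightarrow> 'a + 'b \<Rightarrow> 'a option" where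
  "vs_L f p = (case p of Inl x \<Rightarrow> Some x | Inr u \<Rightarrow> None)"

definition vs_U :: "('a::bounded_lattice \<Rightarrow> 'b::bounded_lattice) \<Rightarrow> 'a + 'b \<Rightarrow> 'b option" where
  "vs_U f p = (case p of Inl x \<Rightarrow> (if x \<in> coatoms then Some (f x) else None)
                        | Inr u \<Rightarrow> Some u)"

definition vs2_le :: "('a::bounded_lattice \<Rightarrow> 'b::bounded_lattice) \<Rightarrow> 'a + 'b \<Rightarrow> 'a + 'b \<Rightarrow> bool" where
  "vs2_le f p q \<longleftrightarrow>
     (\<exists>x y. vs_L f p = Some x \<and> vs_L f q = Some y \<and> x \<le> y) \<or>
     (\<exists>u v. vs_U f p = Some u \<and> vs_U f q = Some v \<and> u \<le> v) \<or>
     (\<exists>x v. vs_L f p = Some x \<and> vs_U f q = Some v \<and>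
        (\<exists>c\<in>coatoms. x \<le> c \<and> f c \<le> v))"

end

theory Submission imports Defs begin
unbundle lattice_syntax

lemma cov_iff: "covers_on UNIV (\<le>) x y \<longleftrightarrow> (x::'a::order) < y \<and> (\<forall>z. x \<le> z \<longrightarrow> z \<le> y \<longrightarrow> z = x \<or> z = y)"
  unfolding covers_on_def by auto

lemma coatom_iff: "(c::'a::bounded_lattice) \<in> coatoms \<longleftrightarrow> c \<noteq> top \<and> (\<forall>z. c \<le> z \<longrightarrow> z = c \<or> z = top)"
  unfolding coatoms_def cov_iff by (auto simp: less_le)

lemma atom_iff: "(a::'a::bounded_lattice) \<in> atoms \<longleftrightarrow> a \<noteq> bot \<and> (\<forall>z. z \<le> a \<longrightarrow> z = bot \<or> z = a)"
  unfolding atoms_def cov_iff by (auto simp: less_le)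

lemma below_coatom:
  assumes "(x::'a::{finite,bounded_lattice}) \<noteq> top" shows "\<exists>c\<in>coatoms. x \<le> c"
proof -
  obtain m where m: "m \<in> {y. x \<le> y \<and> y \<noteq> top}" "\<forall>b\<in>{y. x \<le> y \<and> y \<noteq> top}. m \<le> b \<longrightarrow> m = b"
    using finite_has_maximal[of "{y. x \<le> y \<and> y \<noteq> top}"] assms by auto
  have "m \<in> coatoms" unfolding coatom_iff using m order_trans by blast
  thus ?thesis using m by auto
qed

lemma above_atom:
  assumes "(x::'a::{finite,bounded_lattice}) \<noteq> bot" shows "\<exists>a\<in>atoms. a \<le> x"
proof -
  obtain m where m: "m \<in> {y. y \<le> x \<and> y \<noteq> bot}" "\<forall>b\<in>{y. y \<le> x \<and> y \<noteq> bot}. b \<le> m \<longrightarrow> m = b"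
    using finite_has_minimal[of "{y. y \<le> x \<and> y \<noteq> bot}"] assms by auto
  have "m \<in> atoms" unfolding atom_iff using m order_trans by blast
  thus ?thesis using m by auto
qed

lemma coatoms_sup: "c \<in> coatoms \<Longrightarrow> d \<in> coatoms \<Longrightarrow> c \<noteq> d \<Longrightarrow> c \<squnion> d = (top::'a::bounded_lattice)"
  unfolding coatom_iff by (metis sup.cobounded1 sup.cobounded2 sup.orderE)

lemma atom_le: "a \<in> atoms \<Longrightarrow> b \<in> atoms \<Longrightarrow> a \<le> (b::'a::bounded_lattice) \<Longrightarrow> a = b"
  unfolding atom_iff by metis

lemma cov_inf: "covers_on UNIV (\<le>) m s \<Longrightarrow> covers_on UNIV (\<le>) m t \<Longrightarrow> s \<noteq> t \<Longrightarrow> s \<sqinter> t = (m::'a::lattice)"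
  unfolding cov_iff by (metis inf.absorb_iff1 inf.cobounded1 le_inf_iff less_le)

lemma sm_use:
  assumes "semimodular TYPE('a::lattice)" "covers_on UNIV (\<le>) m s" "covers_on UNIV (\<le>) m t" "s \<noteq> t"
  shows "covers_on UNIV (\<le>) s (s \<squnion> (t::'a))"
proof -
  have "is_inf_on UNIV (\<le>) s t m" using cov_inf[OF assms(2-4)] unfolding is_inf_on_def by auto
  moreover have "is_sup_on UNIV (\<le>) s t (s \<squnion> t)" unfolding is_sup_on_def by auto
  ultimately show ?thesis using assms(1-3) unfolding semimodular_def semimodular_on_def by blast
qed

lemma card2: "card S = 2 \<Longrightarrow> c \<in> S \<Longrightarrow> d \<in> S \<Longrightarrow> c \<noteq> d \<Longrightarrow> e \<in> S \<Longrightarrow> e = c \<or> e = d"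
  unfolding card_2_iff by auto

lemma sup_unique: "partial_order_on' A le \<Longrightarrow> is_sup_on A le x y j \<Longrightarrow> is_sup_on A le x y j' \<Longrightarrow> j = j'"
  unfolding partial_order_on'_def is_sup_on_def by blast

lemma sup_sym: "is_sup_on A le x y j \<longleftrightarrow> is_sup_on A le y x j"
  unfolding is_sup_on_def by blast
lemma inf_sym: "is_inf_on A le x y j \<longleftrightarrow> is_inf_on A le y x j"
  unfolding is_inf_on_def by blast

locale vs2 =
  fixes f :: "'a::{finite,bounded_lattice} \<Rightarrow> 'b::{finite,bounded_lattice}"
  assumes smL: "semimodular TYPE('a)" and cC: "card (coatoms::'a set) = 2"
    and smU: "semimodular TYPE('b)" and cA: "card (atoms::'b set) = 2"
    and bij: "bij_betw f coatoms atoms"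
begin

lemma fC: "c \<in> coatoms \<Longrightarrow> f c \<in> atoms"
  using bij by (force simp: bij_betw_def)
lemma finj: "c \<in> coatoms \<Longrightarrow> d \<in> coatoms \<Longrightarrow> f c = f d \<Longrightarrow> c = d"
  using bij by (auto simp: bij_betw_def inj_on_def)
lemma fsurj: "a \<in> atoms \<Longrightarrow> \<exists>c\<in>coatoms. f c = a"
  using bij by (force simp: bij_betw_def)

lemma le_LL[simp]: "vs2_le f (Inl x) (Inl y) \<longleftrightarrow> x \<le> y"
proof
  assume "vs2_le f (Inl x) (Inl y)"
  then consider "x \<le> y" | "x \<in> coatoms" "y \<in> coatoms" "f x \<le> f y"
    | c where "c \<in> coatoms" "x \<le> c" "y \<in> coatoms" "f c \<le> f y"
    unfolding vs2_le_def vs_L_def vs_U_def by (auto split: if_splits)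
  then show "x \<le> y"
  proof cases
    case 2 thus ?thesis using atom_le fC finj by blast
  next
    case 3 thus ?thesis using atom_le fC finj by blast
  qed simp
qed (simp add: vs2_le_def vs_L_def)

lemma le_LR[simp]: "vs2_le f (Inl x) (Inr v) \<longleftrightarrow> (\<exists>c\<in>coatoms. x \<le> c \<and> f c \<le> v)"
  unfolding vs2_le_def vs_L_def vs_U_def by (auto split: if_splits)

lemma le_RR[simp]: "vs2_le f (Inr u) (Inr v) \<longleftrightarrow> u \<le> v"
  unfolding vs2_le_def vs_L_def vs_U_def by auto

lemma carr_L[simp]: "Inl x \<in> vs2_carrier f \<longleftrightarrow> x \<noteq> top"
  unfolding vs2_carrier_def by auto
lemma carr_R[simp]: "Inr u \<in> vs2_carrier f \<longleftrightarrow> u \<noteq> bot \<and> u \<notin> atoms"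
  unfolding vs2_carrier_def by auto

lemma le_RL[simp]: "Inr u \<in> vs2_carrier f \<Longrightarrow> vs2_le f (Inr u) (Inl y) = False"
  unfolding vs2_le_def vs_L_def vs_U_def using fC atom_iff by (auto split: if_splits)

lemma up_U: "u \<noteq> bot \<Longrightarrow> u \<notin> atoms \<Longrightarrow> u \<le> w \<Longrightarrow> w \<noteq> bot \<and> w \<notin> (atoms::'b set)"
  using atom_iff bot_unique by blast

lemma po: "partial_order_on' (vs2_carrier f) (vs2_le f)"
  unfolding partial_order_on'_def
proof (intro conjI ballI impI)
  fix p assume "p \<in> vs2_carrier f" thus "vs2_le f p p" by (cases p) auto
next
  fix p q assume "p \<in> vs2_carrier f" "q \<in> vs2_carrier f" "vs2_le f p q \<and> vs2_le f q p"
  thus "p = q" by (cases p; cases q) auto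
next
  fix p q r assume "p \<in> vs2_carrier f" "q \<in> vs2_carrier f" "r \<in> vs2_carrier f" "vs2_le f p q \<and> vs2_le f q r"
  thus "vs2_le f p r" by (cases p; cases q; cases r) (auto intro: order_trans)
qed

lemma is_sup_I:
  assumes "j \<in> vs2_carrier f" "vs2_le f p j" "vs2_le f q j"
    "\<And>z. z \<in> vs2_carrier f \<Longrightarrow> vs2_le f p z \<Longrightarrow> vs2_le f q z \<Longrightarrow> vs2_le f j z"
  shows "is_sup_on (vs2_carrier f) (vs2_le f) p q j"
  using assms unfolding is_sup_on_def by blast

lemma C_ne_top: "c \<in> coatoms \<Longrightarrow> c \<noteq> (top::'a)" using coatom_iff by blast

lemma sup_LL1:
  assumes "sup x y \<noteq> (top::'a)"
  shows "is_sup_on (vs2_carrier f) (vs2_le f) (Inl x) (Inl y) (Inl (sup x y))"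
proof (rule is_sup_I)
  fix z assume z: "z \<in> vs2_carrier f" "vs2_le f (Inl x) z" "vs2_le f (Inl y) z"
  show "vs2_le f (Inl (sup x y)) z"
  proof (cases z)
    case (Inl w) thus ?thesis using z by simp
  next
    case (Inr v)
    then obtain c d where cd: "c \<in> coatoms" "x \<le> c" "f c \<le> v" "d \<in> coatoms" "y \<le> d" "f d \<le> v"
      using z by auto
    obtain e where e: "e \<in> coatoms" "sup x y \<le> e" using below_coatom assms by blast
    show ?thesis
    proof (cases "c = d")
      case True thus ?thesis using cd Inr by auto
    next
      case False
      have "e = c \<or> e = d" by (rule card2[OF cC cd(1) cd(4) False e(1)])
      thus ?thesis using cd e Inr by auto
    qed
  qed
qed (use assms in auto)

lemma sup_LL2:
  assumes "x \<noteq> top" "y \<noteq> top" "c \<in> coatoms" "d \<in> coatoms" "c \<noteq> d" "x \<le> c" "y \<le> d" "sup x y = (top::'a)"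
  shows "is_sup_on (vs2_carrier f) (vs2_le f) (Inl x) (Inl y) (Inr (sup (f c) (f d)))"
proof (rule is_sup_I)
  show "Inr (sup (f c) (f d)) \<in> vs2_carrier f"
  proof -
    have "sup (f c) (f d) \<noteq> bot" using fC[OF assms(3)] atom_iff by (metis bot_unique sup.cobounded1)
    moreover have "sup (f c) (f d) \<notin> atoms"
    proof
      assume a: "sup (f c) (f d) \<in> atoms"
      have "f c = sup (f c) (f d)" using atom_le[OF fC[OF assms(3)] a] by simp
      moreover have "f d = sup (f c) (f d)" using atom_le[OF fC[OF assms(4)] a] by simp
      ultimately show False using finj assms by metis
    qed
    ultimately show ?thesis by simp
  qed
next
  fix z assume z: "z \<in> vs2_carrier f" "vs2_le f (Inl x) z" "vs2_le f (Inl y) z"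
  show "vs2_le f (Inr (sup (f c) (f d))) z"
  proof (cases z)
    case (Inl w)
    then have "sup x y \<le> w" using z by simp
    thus ?thesis using z assms Inl by (simp add: top_unique)
  next
    case (Inr v)
    then obtain c' d' where cd: "c' \<in> coatoms" "x \<le> c'" "f c' \<le> v" "d' \<in> coatoms" "y \<le> d'" "f d' \<le> v"
      using z by auto
    have "c' \<noteq> d'" using cd assms C_ne_top by (metis le_sup_iff top.extremum_unique)
    then have "c = c' \<or> c = d'" "d = c' \<or> d = d'" using card2[OF cC cd(1) cd(4)] assms by auto
    thus ?thesis using Inr cd assms by auto
  qed
qed (use assms in auto)

lemma sup_RR:
  assumes "Inr u \<in> vs2_carrier f" "Inr v \<in> vs2_carrier f"
  shows "is_sup_on (vs2_carrier f) (vs2_le f) (Inr u) (Inr v) (Inr (sup u v))"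
proof (rule is_sup_I)
  show "Inr (sup u v) \<in> vs2_carrier f" using up_U[of u "sup u v"] assms by simp
next
  fix z assume z: "z \<in> vs2_carrier f" "vs2_le f (Inr u) z" "vs2_le f (Inr v) z"
  thus "vs2_le f (Inr (sup u v)) z" using assms by (cases z) auto
qed auto

lemma sup_LR:
  assumes "x \<noteq> top" "Inr v \<in> vs2_carrier f"
  shows "\<exists>j. is_sup_on (vs2_carrier f) (vs2_le f) (Inl x) (Inr v) j"
proof (cases "\<exists>c\<in>coatoms. x \<le> c \<and> f c \<le> v")
  case True
  have "is_sup_on (vs2_carrier f) (vs2_le f) (Inl x) (Inr v) (Inr v)"
  proof (rule is_sup_I)
    fix z assume z: "z \<in> vs2_carrier f" "vs2_le f (Inl x) z" "vs2_le f (Inr v) z"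
    thus "vs2_le f (Inr v) z" using assms by (cases z) auto
  qed (use assms True in auto)
  thus ?thesis by blast
next
  case False
  obtain c where c: "c \<in> coatoms" "x \<le> c" using below_coatom assms by blast
  have "is_sup_on (vs2_carrier f) (vs2_le f) (Inl x) (Inr v) (Inr (sup (f c) v))"
  proof (rule is_sup_I)
    show "Inr (sup (f c) v) \<in> vs2_carrier f" using up_U[of v "sup (f c) v"] assms by simp
  next
    fix z assume z: "z \<in> vs2_carrier f" "vs2_le f (Inl x) z" "vs2_le f (Inr v) z"
    show "vs2_le f (Inr (sup (f c) v)) z"
    proof (cases z)
      case (Inl w) thus ?thesis using z assms by simp
    next
      case (Inr w)
      then obtain c'' where c'': "c'' \<in> coatoms" "x \<le> c''" "f c'' \<le> w" "v \<le> w" using z by auto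
      have "f c \<le> w"
      proof (cases "c'' = c")
        case True thus ?thesis using c'' by simp
      next
        case ne: False
        obtain a where a: "a \<in> atoms" "a \<le> v" using above_atom assms by auto
        obtain c3 where c3: "c3 \<in> coatoms" "f c3 = a" using fsurj a by blast
        have "c3 = c'' \<or> c3 = c" using card2[OF cC c''(1) c(1) ne c3(1)] .
        thus ?thesis using False c c'' c3 a by auto
      qed
      thus ?thesis using Inr c c'' by auto
    qed
  qed (use assms c in auto)
  thus ?thesis by blast
qed

lemma sup_ex: "p \<in> vs2_carrier f \<Longrightarrow> q \<in> vs2_carrier f \<Longrightarrow> \<exists>j. is_sup_on (vs2_carrier f) (vs2_le f) p q j"
proof (cases p; cases q)
  fix x y assume a: "p \<in> vs2_carrier f" "q \<in> vs2_carrier f" "p = Inl x" "q = Inl y"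
  show ?thesis
  proof (cases "sup x y = top")
    case False
    have "is_sup_on (vs2_carrier f) (vs2_le f) (Inl x) (Inl y) (Inl (sup x y))" by (rule sup_LL1[OF False])
    thus ?thesis using a by blast
  next
    case True
    have "x \<noteq> top" "y \<noteq> top" using a by auto
    then obtain c d where cd: "c \<in> coatoms" "x \<le> c" "d \<in> coatoms" "y \<le> d" using below_coatom by metis
    have "c \<noteq> d"
    proof
      assume "c = d"
      then have "sup x y \<le> c" using cd by simp
      thus False using True C_ne_top[OF cd(1)] by (simp add: top_unique)
    qed
    thus ?thesis using sup_LL2[of x y c d] cd a True by auto
  qed
next
  fix x v assume a: "p \<in> vs2_carrier f" "q \<in> vs2_carrier f" "p = Inl x" "q = Inr v"
  thus ?thesis using sup_LR[of x v] by simp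
next
  fix x v assume a: "p \<in> vs2_carrier f" "q \<in> vs2_carrier f" "p = Inr v" "q = Inl x"
  then obtain j where "is_sup_on (vs2_carrier f) (vs2_le f) (Inl x) (Inr v) j" using sup_LR[of x v] by auto
  thus ?thesis using a by (subst sup_sym) auto
next
  fix u v assume a: "p \<in> vs2_carrier f" "q \<in> vs2_carrier f" "p = Inr u" "q = Inr v"
  thus ?thesis using sup_RR by blast
qed

lemma bot_ne_top: "(bot::'a) \<noteq> top"
proof -
  obtain c where c: "c \<in> (coatoms::'a set)" using cC card_2_iff by fastforce
  show ?thesis
  proof
    assume "(bot::'a) = top"
    then have "c = top" using bot_unique top_greatest by metis
    thus False using C_ne_top c by blast
  qed
qed

lemma bot_le: "p \<in> vs2_carrier f \<Longrightarrow> vs2_le f (Inl bot) p"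
proof (cases p)
  case (Inr v)
  assume "p \<in> vs2_carrier f"
  then have "v \<noteq> bot" using Inr by simp
  then obtain a where "a \<in> atoms" "a \<le> v" using above_atom by blast
  then obtain c where "c \<in> coatoms" "f c \<le> v" using fsurj by blast
  thus ?thesis using Inr by auto
qed simp

lemma covLL:
  assumes "y \<noteq> top"
  shows "covers_on (vs2_carrier f) (vs2_le f) (Inl x) (Inl y) \<longleftrightarrow> covers_on UNIV (\<le>) x y"
proof
  assume h: "covers_on (vs2_carrier f) (vs2_le f) (Inl x) (Inl y)"
  show "covers_on UNIV (\<le>) x y" unfolding cov_iff
  proof (intro conjI allI impI)
    show "x < y" using h unfolding covers_on_def by (auto simp: less_le)
    fix z assume z: "x \<le> z" "z \<le> y"
    then have "z \<noteq> top" using assms by (auto simp: top_unique)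
    have "\<forall>w\<in>vs2_carrier f. vs2_le f (Inl x) w \<and> vs2_le f w (Inl y) \<longrightarrow> w = Inl x \<or> w = Inl y"
      using h unfolding covers_on_def by blast
    from this[rule_format, of "Inl z"] have "Inl z = Inl x \<or> Inl z = (Inl y :: 'a + 'b)" using z \<open>z \<noteq> top\<close> by simp
    thus "z = x \<or> z = y" by simp
  qed
next
  assume h: "covers_on UNIV (\<le>) x y"
  then have xy: "x < y" "\<And>z. x \<le> z \<Longrightarrow> z \<le> y \<Longrightarrow> z = x \<or> z = y" unfolding cov_iff by auto
  have xt: "x \<noteq> top" using xy(1) by auto
  show "covers_on (vs2_carrier f) (vs2_le f) (Inl x) (Inl y)" unfolding covers_on_def
  proof (intro conjI)
    show "\<not> (\<exists>z\<in>vs2_carrier f. vs2_le f (Inl x) z \<and> vs2_le f z (Inl y) \<and> z \<noteq> Inl x \<and> z \<noteq> Inl y)"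
    proof
      assume "\<exists>z\<in>vs2_carrier f. vs2_le f (Inl x) z \<and> vs2_le f z (Inl y) \<and> z \<noteq> Inl x \<and> z \<noteq> Inl y"
      then obtain z where z: "z \<in> vs2_carrier f" "vs2_le f (Inl x) z" "vs2_le f z (Inl y)" "z \<noteq> Inl x" "z \<noteq> Inl y" by blast
      show False
      proof (cases z)
        case (Inl w) thus False using z xy(2)[of w] by auto
      next
        case (Inr w) thus False using z by simp
      qed
    qed
  qed (use assms xy(1) xt in \<open>auto simp: less_le\<close>)
qed

lemma covRR:
  assumes "Inr u \<in> vs2_carrier f" "Inr v \<in> vs2_carrier f"
  shows "covers_on (vs2_carrier f) (vs2_le f) (Inr u) (Inr v) \<longleftrightarrow> covers_on UNIV (\<le>) u v"
proof
  assume h: "covers_on (vs2_carrier f) (vs2_le f) (Inr u) (Inr v)"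
  show "covers_on UNIV (\<le>) u v" unfolding cov_iff
  proof (intro conjI allI impI)
    show "u < v" using h unfolding covers_on_def by (auto simp: less_le)
    fix z assume z: "u \<le> z" "z \<le> v"
    then have "Inr z \<in> vs2_carrier f" using assms up_U[of u z] by simp
    have "\<forall>w\<in>vs2_carrier f. vs2_le f (Inr u) w \<and> vs2_le f w (Inr v) \<longrightarrow> w = Inr u \<or> w = Inr v"
      using h unfolding covers_on_def by blast
    from this[rule_format, of "Inr z"] have "Inr z = Inr u \<or> Inr z = (Inr v :: 'a + 'b)" using z \<open>Inr z \<in> vs2_carrier f\<close> by simp
    thus "z = u \<or> z = v" by simp
  qed
next
  assume h: "covers_on UNIV (\<le>) u v"
  then have xy: "u < v" "\<And>z. u \<le> z \<Longrightarrow> z \<le> v \<Longrightarrow> z = u \<or> z = v" unfolding cov_iff by auto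
  show "covers_on (vs2_carrier f) (vs2_le f) (Inr u) (Inr v)" unfolding covers_on_def
  proof (intro conjI)
    show "\<not> (\<exists>z\<in>vs2_carrier f. vs2_le f (Inr u) z \<and> vs2_le f z (Inr v) \<and> z \<noteq> Inr u \<and> z \<noteq> Inr v)"
    proof
      assume "\<exists>z\<in>vs2_carrier f. vs2_le f (Inr u) z \<and> vs2_le f z (Inr v) \<and> z \<noteq> Inr u \<and> z \<noteq> Inr v"
      then obtain z where z: "z \<in> vs2_carrier f" "vs2_le f (Inr u) z" "vs2_le f z (Inr v)" "z \<noteq> Inr u" "z \<noteq> Inr v" by blast
      show False
      proof (cases z)
        case (Inl w) thus False using z assms by simp
      next
        case (Inr w) thus False using z xy(2)[of w] by auto
      qed
    qed
  qed (use assms xy(1) in \<open>auto simp: less_le\<close>)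
qed

lemma covRL: "Inr u \<in> vs2_carrier f \<Longrightarrow> \<not> covers_on (vs2_carrier f) (vs2_le f) (Inr u) (Inl y)"
  unfolding covers_on_def by simp

lemma covLR_D:
  assumes h: "covers_on (vs2_carrier f) (vs2_le f) (Inl x) (Inr v)"
  shows "x \<in> coatoms \<and> covers_on UNIV (\<le>) (f x) v"
proof -
  have v: "Inr v \<in> vs2_carrier f" using h unfolding covers_on_def by blast
  obtain c where c: "c \<in> coatoms" "x \<le> c" "f c \<le> v" using h unfolding covers_on_def by auto
  have xc: "x = c"
  proof (rule ccontr)
    assume xc: "x \<noteq> c"
    have c1: "Inl c \<in> vs2_carrier f" using C_ne_top c by simp
    have c2: "vs2_le f (Inl x) (Inl c)" using c by simp
    have c3: "vs2_le f (Inl c) (Inr v)" using c by auto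
    have b: "\<forall>w\<in>vs2_carrier f. vs2_le f (Inl x) w \<and> vs2_le f w (Inr v) \<longrightarrow> w = Inl x \<or> w = Inr v"
      using h unfolding covers_on_def by blast
    from b c1 c2 c3 have "Inl c = Inl x \<or> Inl c = (Inr v :: 'a + 'b)" by blast
    thus False using xc by simp
  qed
  have "covers_on UNIV (\<le>) (f c) v" unfolding cov_iff
  proof (intro conjI allI impI)
    show "f c < v" using c v fC by (auto simp: less_le)
    fix z assume z: "f c \<le> z" "z \<le> v"
    show "z = f c \<or> z = v"
    proof (rule ccontr)
      assume nz: "\<not> (z = f c \<or> z = v)"
      have zb: "z \<noteq> bot" using z fC[OF c(1)] atom_iff bot_unique by metis
      have za: "z \<notin> atoms" using z nz fC[OF c(1)] atom_le by metis
      have "Inr z \<in> vs2_carrier f" using zb za by simp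
      moreover have "vs2_le f (Inl x) (Inr z)" using c z by auto
      moreover have "vs2_le f (Inr z) (Inr v)" using z by simp
      moreover have b: "\<forall>w\<in>vs2_carrier f. vs2_le f (Inl x) w \<and> vs2_le f w (Inr v) \<longrightarrow> w = Inl x \<or> w = Inr v"
        using h unfolding covers_on_def by blast
      ultimately have "Inr z = Inl x \<or> Inr z = (Inr v :: 'a + 'b)" by blast
      thus False using nz by simp
    qed
  qed
  thus ?thesis using xc c by simp
qed

lemma covLR_I:
  assumes "x \<in> coatoms" "covers_on UNIV (\<le>) (f x) v" "Inr v \<in> vs2_carrier f"
  shows "covers_on (vs2_carrier f) (vs2_le f) (Inl x) (Inr v)"
proof -
  have xy: "f x < v" "\<And>z. f x \<le> z \<Longrightarrow> z \<le> v \<Longrightarrow> z = f x \<or> z = v" using assms(2) unfolding cov_iff by auto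
  show ?thesis unfolding covers_on_def
  proof (intro conjI)
    show "\<not> (\<exists>z\<in>vs2_carrier f. vs2_le f (Inl x) z \<and> vs2_le f z (Inr v) \<and> z \<noteq> Inl x \<and> z \<noteq> Inr v)"
    proof
      assume "\<exists>z\<in>vs2_carrier f. vs2_le f (Inl x) z \<and> vs2_le f z (Inr v) \<and> z \<noteq> Inl x \<and> z \<noteq> Inr v"
      then obtain z where z: "z \<in> vs2_carrier f" "vs2_le f (Inl x) z" "vs2_le f z (Inr v)" "z \<noteq> Inl x" "z \<noteq> Inr v" by blast
      show False
      proof (cases z)
        case (Inl w)
        then have "x \<le> w" "w \<noteq> top" using z by auto
        thus False using assms(1) Inl z coatom_iff by metis
      next
        case (Inr w)
        then obtain c where c: "c \<in> coatoms" "x \<le> c" "f c \<le> w" using z by auto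
        have "c = x" using c assms(1) coatom_iff C_ne_top by metis
        then have "w = f x \<or> w = v" using xy(2)[of w] c z Inr by auto
        moreover have "w \<noteq> f x" using z Inr fC[OF assms(1)] by auto
        ultimately show False using z Inr by auto
      qed
    qed
  qed (use assms xy(1) C_ne_top in \<open>auto simp: less_le\<close>)
qed


lemma lub_ex:
  assumes po: "partial_order_on' A le" and sups: "\<forall>x\<in>A. \<forall>y\<in>A. \<exists>j. is_sup_on A le x y j"
    and "finite S" "S \<noteq> {}" "S \<subseteq> A"
  shows "\<exists>j\<in>A. (\<forall>s\<in>S. le s j) \<and> (\<forall>z\<in>A. (\<forall>s\<in>S. le s z) \<longrightarrow> le j z)"
  using assms(3-5)
proof (induction S rule: finite_ne_induct)
  case (singleton x)
  have "le x x" using po singleton unfolding partial_order_on'_def by blast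
  then show ?case using singleton by auto
next
  case (insert x F)
  then obtain jF where jF: "jF \<in> A" "\<forall>s\<in>F. le s jF" "\<forall>z\<in>A. (\<forall>s\<in>F. le s z) \<longrightarrow> le jF z" by auto
  obtain j where j: "is_sup_on A le x jF j" using sups insert jF by blast
  have trans: "\<And>a b c. a \<in> A \<Longrightarrow> b \<in> A \<Longrightarrow> c \<in> A \<Longrightarrow> le a b \<Longrightarrow> le b c \<Longrightarrow> le a c"
    using po unfolding partial_order_on'_def by blast
  show ?case
  proof (intro bexI conjI ballI impI)
    show "j \<in> A" using j unfolding is_sup_on_def by blast
    fix s assume "s \<in> insert x F"
    show "le s j"
    proof (cases "s = x")
      case True thus ?thesis using j unfolding is_sup_on_def by blast
    next
      case False
      then have s: "s \<in> F" using \<open>s \<in> insert x F\<close> by blast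
      have "s \<in> A" "j \<in> A" "le jF j" using s insert.prems j unfolding is_sup_on_def by auto
      moreover have "le s jF" using jF s by blast
      ultimately show ?thesis using trans[of s jF j] jF(1) by blast
    qed
  next
    fix z assume "z \<in> A" "\<forall>s\<in>insert x F. le s z"
    then have "le jF z" "le x z" using jF by auto
    thus "le j z" using j \<open>z \<in> A\<close> unfolding is_sup_on_def by blast
  qed
qed

lemma lattice_gen:
  assumes fin: "finite A" and po: "partial_order_on' A le" and sups: "\<forall>x\<in>A. \<forall>y\<in>A. \<exists>j. is_sup_on A le x y j"
    and b: "b \<in> A" "\<forall>x\<in>A. le b x"
  shows "lattice_on A le"
  unfolding lattice_on_def
proof (intro conjI ballI po)
  fix x y assume xy: "x \<in> A" "y \<in> A"
  show "\<exists>j. is_sup_on A le x y j" using sups xy by blast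
  let ?S = "{z\<in>A. le z x \<and> le z y}"
  have "finite ?S" using fin by simp
  moreover have "?S \<noteq> {}" using b xy by blast
  ultimately obtain m where m: "m \<in> A" "\<forall>s\<in>?S. le s m" "\<forall>z\<in>A. (\<forall>s\<in>?S. le s z) \<longrightarrow> le m z"
    using lub_ex[OF po sups, of ?S] by blast
  have "le m x" "le m y" using m xy by auto
  hence "is_inf_on A le x y m" using m unfolding is_inf_on_def by auto
  thus "\<exists>m. is_inf_on A le x y m" by blast
qed

end

context vs2 begin

lemma Ucase:
  assumes "Inr s' \<in> vs2_carrier f" "Inr t' \<in> vs2_carrier f" "covers_on UNIV (\<le>) w s'" "covers_on UNIV (\<le>) w t'"
    "s' \<noteq> t'" "is_sup_on (vs2_carrier f) (vs2_le f) (Inr s') (Inr t') j"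
  shows "covers_on (vs2_carrier f) (vs2_le f) (Inr s') j"
proof -
  have j: "j = Inr (sup s' t')" using sup_unique[OF po assms(6) sup_RR[OF assms(1,2)]] .
  have "covers_on UNIV (\<le>) s' (sup s' t')" using sm_use[OF smU assms(3-5)] .
  moreover have "Inr (sup s' t') \<in> vs2_carrier f" using assms(6) j unfolding is_sup_on_def by blast
  ultimately show ?thesis using covRR assms(1) j by simp
qed

lemma coatom_no_up: "x \<in> coatoms \<Longrightarrow> y \<noteq> top \<Longrightarrow> \<not> covers_on (vs2_carrier f) (vs2_le f) (Inl x) (Inl y)"
  unfolding covers_on_def using coatom_iff by auto

lemma sm_half:
  assumes s: "s \<in> vs2_carrier f" and t: "t \<in> vs2_carrier f"
    and inf: "is_inf_on (vs2_carrier f) (vs2_le f) s t m" and sup: "is_sup_on (vs2_carrier f) (vs2_le f) s t j"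
    and cms: "covers_on (vs2_carrier f) (vs2_le f) m s" and cmt: "covers_on (vs2_carrier f) (vs2_le f) m t"
  shows "covers_on (vs2_carrier f) (vs2_le f) s j"
proof -
  have mP: "m \<in> vs2_carrier f" using inf unfolding is_inf_on_def by blast
  have ne: "s \<noteq> t"
  proof
    assume "s = t"
    then have "vs2_le f s m" "vs2_le f m s" using inf s po unfolding is_inf_on_def partial_order_on'_def by blast+
    then have "m = s" using po s mP unfolding partial_order_on'_def by blast
    thus False using cms unfolding covers_on_def by blast
  qed
  show ?thesis
  proof (cases m)
    case (Inr u)
    obtain s' where s': "s = Inr s'" using cms covRL mP Inr by (cases s) auto
    obtain t' where t': "t = Inr t'" using cmt covRL mP Inr by (cases t) auto
    have "covers_on UNIV (\<le>) u s'" "covers_on UNIV (\<le>) u t'" using covRR cms cmt s t s' t' mP Inr by auto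
    thus ?thesis using Ucase s t s' t' ne sup by auto
  next
    case (Inl x)
    show ?thesis
    proof (cases s)
      case (Inr s')
      have x: "x \<in> coatoms" "covers_on UNIV (\<le>) (f x) s'" using covLR_D cms Inl Inr by auto
      obtain t' where t': "t = Inr t'" using cmt coatom_no_up[OF x(1)] t Inl by (cases t) auto
      have "covers_on UNIV (\<le>) (f x) t'" using covLR_D cmt Inl t' by auto
      thus ?thesis using Ucase s t Inr t' ne sup x by auto
    next
      case sL: (Inl s')
      have xnc: "x \<notin> coatoms" using coatom_no_up cms Inl sL s by auto
      obtain t' where t': "t = Inl t'" using cmt covLR_D xnc Inl by (cases t) auto
      have st: "s' \<noteq> top" "t' \<noteq> top" using s t sL t' by auto
      have cx: "covers_on UNIV (\<le>) x s'" "covers_on UNIV (\<le>) x t'" using covLL st cms cmt Inl sL t' by auto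
      have ne': "s' \<noteq> t'" using ne sL t' by auto
      have c1: "covers_on UNIV (\<le>) s' (sup s' t')" using sm_use[OF smL cx ne'] .
      show ?thesis
      proof (cases "sup s' t' = top")
        case False
        have "j = Inl (sup s' t')" using sup_unique[OF po sup] sup_LL1[OF False] sL t' by simp
        thus ?thesis using covLL c1 False sL by simp
      next
        case True
        have c2: "covers_on UNIV (\<le>) t' (sup t' s')" using sm_use[OF smL cx(2) cx(1)] ne' by simp
        have sC: "s' \<in> coatoms" using c1 True unfolding coatoms_def by simp
        have tC: "t' \<in> coatoms" using c2 True unfolding coatoms_def by (simp add: sup_commute)
        have jj: "is_sup_on (vs2_carrier f) (vs2_le f) (Inl s') (Inl t') (Inr (sup (f s') (f t')))"
          using sup_LL2[OF st sC tC ne' order_refl order_refl True] .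
        have j: "j = Inr (sup (f s') (f t'))" using sup_unique[OF po sup] jj sL t' by simp
        have jP: "Inr (sup (f s') (f t')) \<in> vs2_carrier f" using jj unfolding is_sup_on_def by blast
        have a1: "covers_on UNIV (\<le>) bot (f s')" "covers_on UNIV (\<le>) bot (f t')"
          using fC[OF sC] fC[OF tC] unfolding atoms_def by auto
        have "f s' \<noteq> f t'" using finj sC tC ne' by blast
        then have "covers_on UNIV (\<le>) (f s') (sup (f s') (f t'))" using sm_use[OF smU a1] by blast
        thus ?thesis using covLR_I[OF sC _ jP] j sL by simp
      qed
    qed
  qed
qed

end

theorem lemma3p5:
  fixes f :: "'a::{finite,bounded_lattice} \<Rightarrow> 'b::{finite,bounded_lattice}"
  assumes "semimodular TYPE('a)"
    and "card (coatoms :: 'a set) = 2"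
    and "semimodular TYPE('b)"
    and "card (atoms :: 'b set) = 2"
    and "bij_betw f coatoms atoms"
  shows "lattice_on (vs2_carrier f) (vs2_le f) \<and> semimodular_on (vs2_carrier f) (vs2_le f)"
proof -
  interpret vs2 f using assms by unfold_locales
  have fin: "finite (vs2_carrier f)" by (rule finite_subset[of _ UNIV]) auto
  have "lattice_on (vs2_carrier f) (vs2_le f)"
    by (rule lattice_gen[OF fin po _ _, of "Inl bot"]) (use sup_ex bot_le bot_ne_top in auto)
  moreover have "semimodular_on (vs2_carrier f) (vs2_le f)"
    unfolding semimodular_on_def
  proof (intro ballI allI impI conjI)
    fix s t m j
    assume st: "s \<in> vs2_carrier f" "t \<in> vs2_carrier f"
      and h: "is_inf_on (vs2_carrier f) (vs2_le f) s t m \<and> is_sup_on (vs2_carrier f) (vs2_le f) s t j \<and>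
        covers_on (vs2_carrier f) (vs2_le f) m s \<and> covers_on (vs2_carrier f) (vs2_le f) m t"
    show "covers_on (vs2_carrier f) (vs2_le f) s j" using sm_half st h by blast
    have "is_inf_on (vs2_carrier f) (vs2_le f) t s m" "is_sup_on (vs2_carrier f) (vs2_le f) t s j"
      using h inf_sym[of _ _ s t] sup_sym[of _ _ s t] by auto
    thus "covers_on (vs2_carrier f) (vs2_le f) t j" using sm_half st h by blast
  qed
  ultimately show ?thesis ..
qed

end
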